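(* Consider two agents with combination matrix $A=\begin{bmatrix}a&1-a\\1-a&a\end{bmatrix}$, $a\in(0,1)$, so $p=[0.5;0.5]$, $P=0.5I_2$. Let $\overline{A}=(I_2+A)/2$, let $(P-AP)/2=U\Sigma U^{\mathsf{T}}$ be an eigendecomposition and $V=U\Sigma^{1/2}U^{\mathsf{T}}$. For step-size $\mu$ and $\sigma^2>0$, define $Q_d=\begin{bmatrix}(1-\mu\sigma^2)\overline{A} & -2V\\ (1-\mu\sigma^2)V\overline{A} & \overline{A}\end{bmatrix}\in\mathbb{R}^{4\times4}$. Then $Q_d$ admits the decomposition $Q_d=X\overline{Q}_dX^{-1}$ with $\overline{Q}_d=\begin{bmatrix}1&0\\0&E_d\end{bmatrix}$, $E_d=\begin{bmatrix}1-\mu\sigma^2&0&0\\0&(1-\mu\sigma^2)a&-\sqrt{2-2a}\\0&(1-\mu\sigma^2)a\sqrt{\frac{1-a}{2}}&a\end{bmatrix}$, and $X=[r\ \ X_R]$, $X^{-1}=\begin{bmatrix}\ell^{\mathsf{T}}\\ X_L\end{bmatrix}$ with $X_R\in\mathbb{R}^{4\times3}$, $X_L\in\mathbb{R}^{3\times4}$, $r=\frac12\begin{bmatrix}0\\ \mathds{1}_2\end{bmatrix}\in\mathbb{R}^4$, $\ell=\begin{bmatrix}0\\ \mathds{1}_2\end{bmatrix}\in\mathbb{R}^4$ (here $0\in\mathbb{R}^2$).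
   Context: Analytical two-agent mean-square-error example: costs $\frac12(w^{\mathsf{T}}R_{u,k}w-2r_{du,k}^{\mathsf{T}}w)$ with $R_{u,1}=R_{u,2}=\sigma^2I_M$, same step-size $\mu$; the exact diffusion error recursion is $\widetilde{z}_i=(Q_d\otimes I_M)\widetilde{z}_{i-1}$. *)

theory Defs
  imports "Jordan_Normal_Form.Matrix"
begin

definition combA :: "real \<Rightarrow> real mat" where
  "combA a = mat_of_rows_list 2 [[a, 1 - a], [1 - a, a]]"

definition perronP :: "real mat" where
  "perronP = (1/2 :: real) \<cdot>\<^sub>m 1\<^sub>m 2"

definition Abar :: "real \<Rightarrow> real mat" where
  "Abar a = (1/2 :: real) \<cdot>\<^sub>m (1\<^sub>m 2 + combA a)"

definition diag_sqrt :: "real mat \<Rightarrow> real mat" where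
  "diag_sqrt S = mat (dim_row S) (dim_col S) (\<lambda>(i, j). if i = j then sqrt (S $$ (i, i)) else 0)"

definition Qd :: "real \<Rightarrow> real \<Rightarrow> real \<Rightarrow> real mat \<Rightarrow> real mat" where
  "Qd a mu sigma2 V = four_block_mat
      ((1 - mu * sigma2) \<cdot>\<^sub>m Abar a)      ((-2 :: real) \<cdot>\<^sub>m V)
      ((1 - mu * sigma2) \<cdot>\<^sub>m (V * Abar a))  (Abar a)"

definition Ed :: "real \<Rightarrow> real \<Rightarrow> real \<Rightarrow> real mat" where
  "Ed a mu sigma2 = mat_of_rows_list 3
     [[1 - mu * sigma2, 0, 0],
      [0, (1 - mu * sigma2) * a, - sqrt (2 - 2 * a)],
      [0, (1 - mu * sigma2) * a * sqrt ((1 - a) / 2), a]]"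

definition Qbar :: "real \<Rightarrow> real \<Rightarrow> real \<Rightarrow> real mat" where
  "Qbar a mu sigma2 = four_block_mat (1\<^sub>m 1) (0\<^sub>m 1 3) (0\<^sub>m 3 1) (Ed a mu sigma2)"

definition rvec :: "real vec" where
  "rvec = vec_of_list [0, 0, 1/2, 1/2]"

definition lvec :: "real vec" where
  "lvec = vec_of_list [0, 0, 1, 1]"

definition col_cat :: "real vec \<Rightarrow> real mat \<Rightarrow> real mat" where
  "col_cat v M = mat (dim_row M) (Suc (dim_col M))
     (\<lambda>(i, j). if j = 0 then v $ i else M $$ (i, j - 1))"

definition row_cat :: "real vec \<Rightarrow> real mat \<Rightarrow> real mat" where
  "row_cat v M = mat (Suc (dim_row M)) (dim_col M)
     (\<lambda>(i, j). if i = 0 then v $ j else M $$ (i - 1, j))"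

end

theory Submission
  imports Defs
begin

lemma mat2: "M \<in> carrier_mat 2 2 \<Longrightarrow> M = mat_of_rows_list 2 [[M$$(0,0),M$$(0,1)],[M$$(1,0),M$$(1,1)]]"
  by (rule eq_matI) (auto simp: mat_of_rows_list_def less_Suc_eq numeral_2_eq_2)

lemmas m2simps = mat_of_rows_list_def scalar_prod_def less_Suc_eq numeral_2_eq_2

lemma mul2: "mat_of_rows_list 2 [[a,b],[c,d::real]] * mat_of_rows_list 2 [[e,f],[g,h]] = mat_of_rows_list 2 [[a*e+b*g, a*f+b*h],[c*e+d*g,c*f+d*h]]"
  by (rule eq_matI) (auto simp: m2simps)
lemma tr2: "(mat_of_rows_list 2 [[a,b],[c,d::real]])\<^sup>T = mat_of_rows_list 2 [[a,c],[b,d]]"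
  by (rule eq_matI) (auto simp: m2simps)
lemma one2: "(1\<^sub>m 2 :: real mat) = mat_of_rows_list 2 [[1,0],[0,1]]"
  by (rule eq_matI) (auto simp: m2simps)
lemma sm2: "(k::real) \<cdot>\<^sub>m mat_of_rows_list 2 [[a,b],[c,d]] = mat_of_rows_list 2 [[k*a,k*b],[k*c,k*d]]"
  by (rule eq_matI) (auto simp: m2simps)
lemma add2: "mat_of_rows_list 2 [[a,b],[c,d::real]] + mat_of_rows_list 2 [[e,f],[g,h]] = mat_of_rows_list 2 [[a+e,b+f],[c+g,d+h]]"
  by (rule eq_matI) (auto simp: m2simps)
lemma sub2: "mat_of_rows_list 2 [[a,b],[c,d::real]] - mat_of_rows_list 2 [[e,f],[g,h]] = mat_of_rows_list 2 [[a-e,b-f],[c-g,d-h]]"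
  by (rule eq_matI) (auto simp: m2simps)
lemma dsq2: "diag_sqrt (mat_of_rows_list 2 [[a,b],[c,d::real]]) = mat_of_rows_list 2 [[sqrt a,0],[0,sqrt d]]"
  unfolding diag_sqrt_def by (rule eq_matI) (auto simp: m2simps)
lemma eq2: "(mat_of_rows_list 2 [[a,b],[c,d::real]] = mat_of_rows_list 2 [[e,f],[g,h]]) = (a=e \<and> b=f \<and> c=g \<and> d=h)"
proof
  assume h: "mat_of_rows_list 2 [[a,b],[c,d::real]] = mat_of_rows_list 2 [[e,f],[g,h]]"
  have "\<And>i j. i<2 \<Longrightarrow> j<2 \<Longrightarrow> mat_of_rows_list 2 [[a,b],[c,d::real]] $$ (i,j) = mat_of_rows_list 2 [[e,f],[g,h]] $$ (i,j)" using h by simp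
  from this[of 0 0] this[of 0 1] this[of 1 0] this[of 1 1] show "a=e \<and> b=f \<and> c=g \<and> d=h" by (simp add: mat_of_rows_list_def)
qed simp

lemmas c2 = mul2 tr2 one2 sm2 add2 sub2 dsq2 eq2

lemma Vform:
  fixes a :: real and U Sigma V :: "real mat"
  assumes "0 < a" and "a < 1"
    and "U \<in> carrier_mat 2 2" and "U * U\<^sup>T = 1\<^sub>m 2" and "U\<^sup>T * U = 1\<^sub>m 2"
    and "Sigma \<in> carrier_mat 2 2" and "diagonal_mat Sigma"
    and "(1/2 :: real) \<cdot>\<^sub>m (perronP - combA a * perronP) = U * Sigma * U\<^sup>T"
    and "V = U * diag_sqrt Sigma * U\<^sup>T"
  shows "V = mat_of_rows_list 2 [[sqrt((1-a)/2)/2, -(sqrt((1-a)/2)/2)],[-(sqrt((1-a)/2)/2), sqrt((1-a)/2)/2]]"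
proof -
  obtain u0 u1 u2 u3 where U: "U = mat_of_rows_list 2 [[u0,u1],[u2,u3]]" using mat2[OF assms(3)] by blast
  have s1: "Sigma $$ (0,1) = 0" "Sigma $$ (1,0) = 0" using assms(6,7) unfolding diagonal_mat_def by auto
  obtain s0 s3 where S: "Sigma = mat_of_rows_list 2 [[s0,0],[0,s3]]" using mat2[OF assms(6)] s1 by metis
  have PP: "perronP = mat_of_rows_list 2 [[1/2,0],[0,1/2]]" unfolding perronP_def one2 sm2 by simp
  have AA: "combA a = mat_of_rows_list 2 [[a,1-a],[1-a,a]]" unfolding combA_def ..
  note e = assms(4,5,8)[unfolded U S PP AA c2, simplified]
  define D where "D = diag_sqrt Sigma"
  define M where "M = U * Sigma * U\<^sup>T"
  have Uc: "U\<^sup>T \<in> carrier_mat 2 2" using assms(3) by simp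
  have Dc: "D \<in> carrier_mat 2 2" using assms(6) unfolding D_def diag_sqrt_def by auto
  have SM: "U\<^sup>T * M * U = Sigma"
  proof -
    have "U\<^sup>T * M * U = (U\<^sup>T * U) * Sigma * (U\<^sup>T * U)"
      unfolding M_def using assms(3,6) Uc
      by (simp add: assoc_mult_mat[of _ 2 2 _ 2 _ 2])
    then show ?thesis using assms(5,6) by simp
  qed
  define c where "c = (1-a)/4"
  have Mc: "M = mat_of_rows_list 2 [[c,-c],[-c,c]]"
    using assms(8) unfolding M_def[symmetric] PP AA c2 c_def by (simp add: field_simps)
  have "U\<^sup>T * M * U = mat_of_rows_list 2 [[c*(u0-u2)^2, c*(u0-u2)*(u1-u3)],[c*(u0-u2)*(u1-u3), c*(u1-u3)^2]]"
    unfolding Mc U c2 by (simp add: power2_eq_square algebra_simps)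
  hence E: "mat_of_rows_list 2 [[s0,0],[0,s3]] = mat_of_rows_list 2 [[c*(u0-u2)^2, c*(u0-u2)*(u1-u3)],[c*(u0-u2)*(u1-u3), c*(u1-u3)^2]]" using SM S by simp
  hence "s0 = c*(u0-u2)^2" "s3 = c*(u1-u3)^2" unfolding eq2 by auto
  moreover have "c \<ge> 0" using assms(2) c_def by simp
  ultimately have s0: "s0 \<ge> 0" and s3: "s3 \<ge> 0" by auto
  have DD: "D * D = Sigma" unfolding D_def S c2 using s0 s3 by simp
  have VV: "V * V = M"
  proof -
    have "V * V = U * D * (U\<^sup>T * U) * D * U\<^sup>T"
      unfolding assms(9) D_def[symmetric] using assms(3) Uc Dc
      by (simp add: assoc_mult_mat[of _ 2 2 _ 2 _ 2])
    also have "\<dots> = U * (D * D) * U\<^sup>T" using assms(5) assms(3) Uc Dc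
      by (simp add: assoc_mult_mat[of _ 2 2 _ 2 _ 2])
    finally show ?thesis using DD M_def by simp
  qed
  define d0 where "d0 = sqrt s0"
  define d3 where "d3 = sqrt s3"
  define p where "p = u0*u0*d0 + u1*u1*d3"
  define q where "q = u0*u2*d0 + u1*u3*d3"
  define r where "r = u2*u2*d0 + u3*u3*d3"
  have Vf: "V = mat_of_rows_list 2 [[p,q],[q,r]]"
    unfolding assms(9) U S c2 p_def q_def r_def d0_def d3_def by (simp add: algebra_simps)
  have p0: "p \<ge> 0" "r \<ge> 0" unfolding p_def r_def d0_def d3_def using s0 s3 by auto
  have eqs: "p*p+q*q = c" "p*q+q*r = -c" "q*q+r*r = c" using VV unfolding Vf Mc c2 by auto
  have "p*p = r*r" using eqs by linarith
  hence "sqrt(p*p) = sqrt(r*r)" by simp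
  hence pr: "p = r" using p0 by simp
  have "(p+q)*(p+q) = (p*p+q*q) + (p*q+q*r)" using pr by (simp add: algebra_simps)
  hence "(p+q)*(p+q) = 0" using eqs by simp
  hence qp: "q = -p" by simp
  define w where "w = sqrt((1-a)/2)/2"
  have w0: "w \<ge> 0" unfolding w_def using assms(2) by simp
  have "w*w = (1-a)/8" unfolding w_def using assms(2) by simp
  moreover have "p*p = (1-a)/8" using eqs qp c_def by simp
  ultimately have "p*p = w*w" by simp
  hence "sqrt(p*p) = sqrt(w*w)" by simp
  hence "p = w" using w0 p0 by simp
  hence "p = sqrt((1-a)/2)/2" using w_def by simp
  thus ?thesis unfolding Vf eq2 using pr qp by simp
qed
lemma Abar2: "Abar a = mat_of_rows_list 2 [[(1+a)/2,(1-a)/2],[(1-a)/2,(1+a)/2]]"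
  unfolding Abar_def combA_def one2 add2 sm2 by (simp add: field_simps)

lemmas m4simps = mat_of_rows_list_def scalar_prod_def less_Suc_eq numeral_eq_Suc

lemma Qd4: "Qd a mu s (mat_of_rows_list 2 [[w,-w],[-w,w]]) = mat_of_rows_list 4
   [[(1-mu*s)*(1+a)/2, (1-mu*s)*(1-a)/2, -2*w, 2*w],
    [(1-mu*s)*(1-a)/2, (1-mu*s)*(1+a)/2, 2*w, -2*w],
    [(1-mu*s)*a*w, -(1-mu*s)*a*w, (1+a)/2, (1-a)/2],
    [-(1-mu*s)*a*w, (1-mu*s)*a*w, (1-a)/2, (1+a)/2]]"
  unfolding Qd_def Abar2 c2
  by (rule eq_matI) (auto simp: m4simps four_block_mat_def field_simps)

definition XRm :: "real mat" where
  "XRm = mat_of_rows_list 3 [[1/2,1,0],[1/2,-1,0],[0,0,1],[0,0,-1]]"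
definition XLm :: "real mat" where
  "XLm = mat_of_rows_list 4 [[1,1,0,0],[1/2,-1/2,0,0],[0,0,1/2,-1/2]]"

lemma X4: "col_cat rvec XRm = mat_of_rows_list 4 [[0,1/2,1,0],[0,1/2,-1,0],[1/2,0,0,1],[1/2,0,0,-1]]"
  unfolding col_cat_def XRm_def rvec_def
  by (rule eq_matI) (auto simp: m4simps)
lemma Y4: "row_cat lvec XLm = mat_of_rows_list 4 [[0,0,1,1],[1,1,0,0],[1/2,-1/2,0,0],[0,0,1/2,-1/2]]"
  unfolding row_cat_def XLm_def lvec_def
  by (rule eq_matI) (auto simp: m4simps)

lemma QB4: assumes "sqrt (2 - 2*a) = 4*w" "sqrt ((1-a)/2) = 2*w"
  shows "Qbar a mu s = mat_of_rows_list 4 [[1,0,0,0],[0,1-mu*s,0,0],[0,0,(1-mu*s)*a,-4*w],[0,0,(1-mu*s)*a*(2*w),a]]"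
  unfolding Qbar_def Ed_def assms
  by (rule eq_matI) (auto simp: m4simps four_block_mat_def)

lemma XY: "col_cat rvec XRm * row_cat lvec XLm = 1\<^sub>m 4"
  unfolding X4 Y4 by (rule eq_matI) (auto simp: m4simps)
lemma YX: "row_cat lvec XLm * col_cat rvec XRm = 1\<^sub>m 4"
  unfolding X4 Y4 by (rule eq_matI) (auto simp: m4simps)
lemma XQY: assumes "sqrt (2 - 2*a) = 4*w" "sqrt ((1-a)/2) = 2*w"
  shows "Qd a mu s (mat_of_rows_list 2 [[w,-w],[-w,w]]) = col_cat rvec XRm * Qbar a mu s * row_cat lvec XLm"
  unfolding Qd4 X4 Y4 QB4[OF assms]
  by (rule eq_matI) (auto simp: m4simps field_simps)

theorem lemma5:
  fixes a mu sigma2 :: real and U Sigma V :: "real mat"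
  assumes "0 < a" and "a < 1" and "0 < sigma2"
    and "U \<in> carrier_mat 2 2" and "U * U\<^sup>T = 1\<^sub>m 2" and "U\<^sup>T * U = 1\<^sub>m 2"
    and "Sigma \<in> carrier_mat 2 2" and "diagonal_mat Sigma"
    and "(1/2 :: real) \<cdot>\<^sub>m (perronP - combA a * perronP) = U * Sigma * U\<^sup>T"
    and "V = U * diag_sqrt Sigma * U\<^sup>T"
  shows "\<exists>XR XL. XR \<in> carrier_mat 4 3 \<and> XL \<in> carrier_mat 3 4 \<and>
           col_cat rvec XR * row_cat lvec XL = 1\<^sub>m 4 \<and>
           row_cat lvec XL * col_cat rvec XR = 1\<^sub>m 4 \<and>
           Qd a mu sigma2 V = col_cat rvec XR * Qbar a mu sigma2 * row_cat lvec XL"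
proof -
  define w where "w = sqrt((1-a)/2)/2"
  have V: "V = mat_of_rows_list 2 [[w,-w],[-w,w]]" using Vform[OF assms(1,2,4-10)] unfolding w_def by simp
  have h2: "sqrt ((1-a)/2) = 2*w" using w_def by simp
  have "sqrt (2 - 2*a) = sqrt (4 * ((1-a)/2))" by simp
  also have "\<dots> = sqrt 4 * sqrt ((1-a)/2)" by (simp only: real_sqrt_mult)
  also have "\<dots> = 2 * sqrt ((1-a)/2)" by simp
  finally have h1: "sqrt (2 - 2*a) = 4*w" using h2 by simp
  show ?thesis
    apply (rule exI[of _ XRm], rule exI[of _ XLm])
    using XY YX XQY[OF h1 h2] unfolding V
    by (auto simp: XRm_def XLm_def mat_of_rows_list_def)
qed

end
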